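(* Let $n'\in\mathbb{N}$, $g\in\mathbb{N}$, and let $\phi:\mathbb{N}\to\mathbb{N}^{n'}$ be a monotonic map. Then $\phi$ changes the Stanley depth by $1-n'$ with respect to $g$ and $g':=\phi(g)$.
   Context: $\mathbb{N}^n$ carries the componentwise partial order; $[a,b]=\{c: a\le c\le b\}$; a map is monotonic if it preserves this order. A monotonic map $\phi:\mathbb{N}^n\to\mathbb{N}^{n'}$ changes the Stanley depth by $\ell\in\mathbb{Z}$ with respect to $g\in\mathbb{N}^n$ and $g'\in\mathbb{N}^{n'}$ if (1) $\phi(g)\le g'$, and (2) for every interval $[a',b']\subset[0,g']$, the set $\phi^{-1}([a',b'])\cap[0,g]$ is a finite disjoint union $\bigcup_i[a^i,b^i]$ of intervals with $\#\{j\in[n]: b^i_j=g_j\}\ge\#\{j\in[n']: b'_j=g'_j\}+\ell$ for all $i$. *)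

theory Defs
  imports Main
begin

text \<open>Elements of N^n are represented as lists of naturals of length n.
  The componentwise order: \<open>vle a b\<close> holds iff a and b have the same length
  and a_j \<le> b_j for every j.\<close>

definition vle :: "nat list \<Rightarrow> nat list \<Rightarrow> bool" where
  "vle a b \<longleftrightarrow> list_all2 (\<le>) a b"

definition vinterval :: "nat list \<Rightarrow> nat list \<Rightarrow> nat list set" where
  "vinterval a b = {c. vle a c \<and> vle c b}"

definition mono_vmap :: "nat \<Rightarrow> nat \<Rightarrow> (nat list \<Rightarrow> nat list) \<Rightarrow> bool" where
  "mono_vmap n n' \<phi> \<longleftrightarrow>
     (\<forall>a. length a = n \<longrightarrow> length (\<phi> a) = n') \<and>
     (\<forall>a b. length a = n \<longrightarrow> vle a b \<longrightarrow> vle (\<phi> a) (\<phi> b))"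

definition nmax :: "nat list \<Rightarrow> nat list \<Rightarrow> nat" where
  "nmax b g = card {j. j < length g \<and> b ! j = g ! j}"

definition changes_sdepth ::
  "nat \<Rightarrow> nat \<Rightarrow> (nat list \<Rightarrow> nat list) \<Rightarrow> int \<Rightarrow> nat list \<Rightarrow> nat list \<Rightarrow> bool" where
  "changes_sdepth n n' \<phi> l g g' \<longleftrightarrow>
     length g = n \<and> length g' = n' \<and>
     vle (\<phi> g) g' \<and>
     (\<forall>a' b'. vinterval a' b' \<subseteq> vinterval (replicate n' 0) g' \<longrightarrow>
        (\<exists>P :: (nat list \<times> nat list) set.
           finite P \<and>
           (\<forall>p\<in>P. \<forall>q\<in>P. p \<noteq> q \<longrightarrow>
              vinterval (fst p) (snd p) \<inter> vinterval (fst q) (snd q) = {}) \<and>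
           (\<Union>p\<in>P. vinterval (fst p) (snd p)) =
              {c. \<phi> c \<in> vinterval a' b'} \<inter> vinterval (replicate n 0) g \<and>
           (\<forall>p\<in>P. int (nmax (snd p) g) \<ge> int (nmax b' g') + l)))"

end

theory Submission
  imports Defs
begin

lemma vle_trans: "vle a b \<Longrightarrow> vle b c \<Longrightarrow> vle a c"
  unfolding vle_def by (rule list_all2_trans) auto

lemma vle_refl: "vle a a"
  unfolding vle_def by (simp add: list_all2_refl)

lemma vle_len: "vle a b \<Longrightarrow> length a = length b"
  unfolding vle_def by (simp add: list_all2_lengthD)

lemma vle_single1: "vle [a] c \<longleftrightarrow> (\<exists>x. c = [x] \<and> a \<le> x)"
  unfolding vle_def by (auto simp: list_all2_Cons1)

lemma vle_single2: "vle c [a] \<longleftrightarrow> (\<exists>x. c = [x] \<and> x \<le> a)"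
  unfolding vle_def by (auto simp: list_all2_Cons2)

lemma vint_single: "vinterval [a] [b] = {[x] | x. a \<le> x \<and> x \<le> b}"
  unfolding vinterval_def by (auto simp: vle_single1 vle_single2)

theorem lemma3p6:
  fixes n' g :: nat and \<phi> :: "nat \<Rightarrow> nat list"
  assumes "mono_vmap 1 n' (\<lambda>c. \<phi> (hd c))"
  shows "changes_sdepth 1 n' (\<lambda>c. \<phi> (hd c)) (1 - int n') [g] (\<phi> g)"
proof -
  have len: "\<And>x. length (\<phi> x) = n'" using assms unfolding mono_vmap_def
    by (metis One_nat_def hd_Cons_tl length_Cons list.sel(1) list.size(3))
  have mono: "\<And>x y. x \<le> y \<Longrightarrow> vle (\<phi> x) (\<phi> y)"
  proof -
    fix x y :: nat assume "x \<le> y"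
    hence "vle [x] [y]" unfolding vle_def by simp
    thus "vle (\<phi> x) (\<phi> y)" using assms unfolding mono_vmap_def
      by (metis One_nat_def length_Cons list.sel(1) list.size(3))
  qed
  show ?thesis unfolding changes_sdepth_def
  proof (intro conjI allI impI)
    show "length [g] = 1" by simp
    show "length (\<phi> g) = n'" by (rule len)
    show "vle (\<phi> (hd [g])) (\<phi> g)" by (simp add: vle_refl)
  next
    fix a' b' assume sub: "vinterval a' b' \<subseteq> vinterval (replicate n' 0) (\<phi> g)"
    define S where "S = {x. x \<le> g \<and> \<phi> x \<in> vinterval a' b'}"
    have R: "{c. \<phi> (hd c) \<in> vinterval a' b'} \<inter> vinterval [0] [g] = {[x] | x. x \<in> S}"
    proof (rule set_eqI, rule iffI)
      fix c assume "c \<in> {c. \<phi> (hd c) \<in> vinterval a' b'} \<inter> vinterval [0] [g]"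
      then obtain x where "c = [x]" "x \<le> g" "\<phi> x \<in> vinterval a' b'"
        unfolding vint_single by auto
      thus "c \<in> {[x] | x. x \<in> S}" unfolding S_def by blast
    next
      fix c assume "c \<in> {[x] | x. x \<in> S}"
      then obtain x where "c = [x]" "x \<le> g" "\<phi> x \<in> vinterval a' b'"
        unfolding S_def by blast
      thus "c \<in> {c. \<phi> (hd c) \<in> vinterval a' b'} \<inter> vinterval [0] [g]"
        unfolding vint_single by simp
    qed
    show "\<exists>P. finite P \<and>
           (\<forall>p\<in>P. \<forall>q\<in>P. p \<noteq> q \<longrightarrow>
              vinterval (fst p) (snd p) \<inter> vinterval (fst q) (snd q) = {}) \<and>
           (\<Union>p\<in>P. vinterval (fst p) (snd p)) =
              {c. \<phi> (hd c) \<in> vinterval a' b'} \<inter> vinterval (replicate 1 0) [g] \<and>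
           (\<forall>p\<in>P. int (nmax (snd p) [g]) \<ge> int (nmax b' (\<phi> g)) + (1 - int n'))"
    proof (cases "S = {}")
      case True
      show ?thesis by (rule exI[of _ "{}"]) (simp add: R True)
    next
      case False
      have fS: "finite S" unfolding S_def by simp
      define lo where "lo = Min S"
      define hi where "hi = Max S"
      have lo: "lo \<in> S" and hi: "hi \<in> S" using fS False lo_def hi_def by auto
      have conv: "S = {lo..hi}"
      proof
        show "S \<subseteq> {lo..hi}" using fS lo_def hi_def by auto
        show "{lo..hi} \<subseteq> S"
        proof
          fix x assume x: "x \<in> {lo..hi}"
          have "\<phi> lo \<in> vinterval a' b'" "\<phi> hi \<in> vinterval a' b'" "hi \<le> g"
            using lo hi by (auto simp: S_def)
          moreover have "vle (\<phi> lo) (\<phi> x)" "vle (\<phi> x) (\<phi> hi)" using x mono by auto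
          ultimately show "x \<in> S" using x unfolding S_def vinterval_def
            by (simp add: vle_trans[of a' "\<phi> lo" "\<phi> x"] vle_trans[of "\<phi> x" "\<phi> hi" b'])
        qed
      qed
      have nm: "nmax b' (\<phi> g) \<le> n'"
      proof -
        have "{j. j < length (\<phi> g) \<and> b' ! j = \<phi> g ! j} \<subseteq> {..<n'}" using len by auto
        thus ?thesis unfolding nmax_def by (metis card_lessThan card_mono finite_lessThan)
      qed
      have key: "int (nmax [hi] [g]) \<ge> int (nmax b' (\<phi> g)) + (1 - int n')"
      proof (cases "nmax b' (\<phi> g) = n'")
        case False thus ?thesis using nm by simp
      next
        case True
        have inl: "\<phi> lo \<in> vinterval a' b'" using lo by (auto simp: S_def)
        hence inl2: "\<phi> lo \<in> vinterval (replicate n' 0) (\<phi> g)" using sub by auto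
        have lb: "length b' = n'" using inl inl2 unfolding vinterval_def
        proof -
          have "vle (\<phi> lo) b'" using inl unfolding vinterval_def by simp
          hence "length (\<phi> lo) = length b'" by (rule vle_len)
          thus ?thesis using len[of lo] by simp
        qed
        have "{j. j < length (\<phi> g) \<and> b' ! j = \<phi> g ! j} = {..<n'}"
        proof -
          have s1: "{j. j < length (\<phi> g) \<and> b' ! j = \<phi> g ! j} \<subseteq> {..<n'}" using len by auto
          have "card {j. j < length (\<phi> g) \<and> b' ! j = \<phi> g ! j} = card {..<n'}"
            using True unfolding nmax_def by simp
          thus ?thesis using card_subset_eq[OF finite_lessThan s1] by simp
        qed
        hence "\<forall>j<n'. b' ! j = \<phi> g ! j" by auto
        hence bg: "b' = \<phi> g" using lb len by (metis nth_equalityI)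
        have "lo \<le> g" using lo by (simp add: S_def)
        hence "g \<in> S" unfolding S_def vinterval_def
          using inl bg mono[of lo g] 
          by (simp add: vinterval_def vle_refl vle_trans[of a' "\<phi> lo" "\<phi> g"])
        hence "g \<le> hi" using Max_ge[OF fS] hi_def by simp
        moreover have "hi \<le> g" using hi by (simp add: S_def)
        ultimately have "hi = g" by simp
        thus ?thesis using True by (simp add: nmax_def)
      qed
      have U: "vinterval [lo] [hi] = {[x] | x. x \<in> S}" by (simp add: vint_single conv)
      show ?thesis
        apply (rule exI[of _ "{([lo],[hi])}"]) using U R key by simp
    qed
  qed
qed

end
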